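(* Let $P,Q\in\Gamma_n$ and $0<r\le R$ with $r\le p_i/q_i\le R$ for all $i$. Let $s,t\in\mathbb{R}$. If $s+t\le1$ and $t\le-1$, then $$\frac{1}{4r^{t+1}}\Big(\frac{r+1}{2r}\Big)^{s-2}\Phi_t(P\|Q)\le\Omega_s(P\|Q)\le\frac{1}{4R^{t+1}}\Big(\frac{R+1}{2R}\Big)^{s-2}\Phi_t(P\|Q).$$ If $s+t\ge1$ and $t\ge-1$, then $$\frac{1}{4R^{t+1}}\Big(\frac{R+1}{2R}\Big)^{s-2}\Phi_t(P\|Q)\le\Omega_s(P\|Q)\le\frac{1}{4r^{t+1}}\Big(\frac{r+1}{2r}\Big)^{s-2}\Phi_t(P\|Q).$$
   Context: $\Gamma_n=\{P=(p_1,\dots,p_n): p_i>0,\ \sum_i p_i=1\}$, $n\ge2$. For $P,Q\in\Gamma_n$ and $s\in\mathbb{R}$: $\Phi_s(P\|Q)=[s(s-1)]^{-1}\big[\sum_i p_i^s q_i^{1-s}-1\big]$ for $s\ne0,1$; $\Phi_0(P\|Q)=\sum_i q_i\ln(q_i/p_i)$; $\Phi_1(P\|Q)=\sum_i p_i\ln(p_i/q_i)$. $\Omega_s(P\|Q)=[s(s-1)]^{-1}\big[\sum_i p_i\big(\frac{p_i+q_i}{2p_i}\big)^s-1\big]$ for $s\ne0,1$; $\Omega_0(P\|Q)=\sum_i p_i\ln\frac{2p_i}{p_i+q_i}$; $\Omega_1(P\|Q)=\sum_i\frac{p_i+q_i}{2}\ln\frac{p_i+q_i}{2p_i}$. *)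

theory Defs
  imports Complex_Main
begin

definition Gamma :: "nat \<Rightarrow> (nat \<Rightarrow> real) set" where
  "Gamma n = {p. (\<forall>i<n. p i > 0) \<and> (\<Sum>i<n. p i) = 1}"

definition Phi :: "real \<Rightarrow> nat \<Rightarrow> (nat \<Rightarrow> real) \<Rightarrow> (nat \<Rightarrow> real) \<Rightarrow> real" where
  "Phi s n p q =
     (if s = 0 then (\<Sum>i<n. q i * ln (q i / p i))
      else if s = 1 then (\<Sum>i<n. p i * ln (p i / q i))
      else ((\<Sum>i<n. p i powr s * q i powr (1 - s)) - 1) / (s * (s - 1)))"

definition Omega :: "real \<Rightarrow> nat \<Rightarrow> (nat \<Rightarrow> real) \<Rightarrow> (nat \<Rightarrow> real) \<Rightarrow> real" where
  "Omega s n p q =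
     (if s = 0 then (\<Sum>i<n. p i * ln (2 * p i / (p i + q i)))
      else if s = 1 then (\<Sum>i<n. (p i + q i) / 2 * ln ((p i + q i) / (2 * p i)))
      else ((\<Sum>i<n. p i * ((p i + q i) / (2 * p i)) powr s) - 1) / (s * (s - 1)))"

end

theory Submission
  imports Defs
begin

definition phi :: "real \<Rightarrow> real \<Rightarrow> real" where
 "phi t x = (if t = 0 then x - 1 - ln x else if t = 1 then x * ln x - x + 1
    else (x powr t - 1 - t * (x - 1)) / (t * (t - 1)))"
definition dphi :: "real \<Rightarrow> real \<Rightarrow> real" where
 "dphi t x = (if t = 1 then ln x else (x powr (t - 1) - 1) / (t - 1))"
definition psi :: "real \<Rightarrow> real \<Rightarrow> real" where
 "psi s x = (if s = 0 then x * ln (2 * x / (x + 1)) - (x - 1) / 2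
   else if s = 1 then (x + 1) / 2 * ln ((x + 1) / (2 * x)) + (x - 1) / 2
   else (x powr (1 - s) * ((x + 1) / 2) powr s - 1 - (1 - s / 2) * (x - 1)) / (s * (s - 1)))"
definition dpsi :: "real \<Rightarrow> real \<Rightarrow> real" where
 "dpsi s x = (if s = 0 then ln (2 * x / (x + 1)) + 1 / (x + 1) - 1 / 2
   else if s = 1 then ln ((x + 1) / (2 * x)) / 2 + 1 / 2 - 1 / (2 * x)
   else (x powr (- s) * ((x + 1) / 2) powr (s - 1) * (x + 1 - s) / 2 - (1 - s / 2)) / (s * (s - 1)))"
definition ddpsi :: "real \<Rightarrow> real \<Rightarrow> real" where
 "ddpsi s x = 2 powr (- s) * x powr (- s - 1) * (x + 1) powr (s - 2)"

lemma phi_deriv: "x > 0 \<Longrightarrow> (phi t has_real_derivative dphi t x) (at x)"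
proof -
  assume x: "x > 0"
  consider "t = 0" | "t = 1" | "t \<noteq> 0" "t \<noteq> 1" by blast
  then show ?thesis
  proof cases
    case 1
    have "((\<lambda>x. x - 1 - ln x) has_real_derivative 1 - 0 - 1 / x) (at x)"
      using x by (auto intro!: derivative_eq_intros)
    moreover have "1 - 0 - 1 / x = (x powr (t - 1) - 1) / (t - 1)"
      using x 1 by (simp add: powr_minus divide_simps)
    ultimately show ?thesis using 1 unfolding phi_def dphi_def by simp
  next
    case 2
    have "((\<lambda>x. x * ln x - x + 1) has_real_derivative 1 * ln x + x * (1/x) - 1 + 0) (at x)"
      using x by (auto intro!: derivative_eq_intros)
    then show ?thesis using 2 x unfolding phi_def dphi_def by simp
  next
    case 3
    have "((\<lambda>x. (x powr t - 1 - t * (x - 1)) / (t * (t - 1))) has_real_derivative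
       (t * x powr (t - 1) - 0 - t * (1 - 0)) / (t * (t - 1))) (at x)"
      using x 3 by (auto intro!: derivative_eq_intros)
    moreover have "(t * x powr (t - 1) - 0 - t * (1 - 0)) / (t * (t - 1)) = (x powr (t - 1) - 1) / (t - 1)"
      using 3 by (simp add: field_simps)
    moreover have "phi t = (\<lambda>x. (x powr t - 1 - t * (x - 1)) / (t * (t - 1)))"
      using 3 by (intro ext) (simp add: phi_def)
    ultimately show ?thesis using 3 unfolding dphi_def by simp
  qed
qed

lemma dphi_deriv: "x > 0 \<Longrightarrow> (dphi t has_real_derivative x powr (t - 2)) (at x)"
proof -
  assume x: "x > 0"
  consider "t = 1" | "t \<noteq> 1" by blast
  then show ?thesis
  proof cases
    case 1
    have "(ln has_real_derivative 1 / x) (at x)"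
      using x by (auto intro!: derivative_eq_intros)
    moreover have "1 / x = x powr (t - 2)" using x 1 by (simp add: powr_minus divide_simps)
    ultimately show ?thesis using 1 unfolding dphi_def by simp
  next
    case 2
    have "((\<lambda>x. (x powr (t - 1) - 1) / (t - 1)) has_real_derivative
       ((t - 1) * x powr (t - 1 - 1) - 0) / (t - 1)) (at x)"
      using x by (auto intro!: derivative_eq_intros)
    moreover have "((t - 1) * x powr (t - 1 - 1) - 0) / (t - 1) = x powr (t - 2)"
      using 2 by (simp add: field_simps)
    ultimately show ?thesis using 2 unfolding dphi_def by simp
  qed
qed

lemma psi_gen_deriv:
  assumes x: "x > 0" and s: "s \<noteq> 0" "s \<noteq> 1"
  shows "((\<lambda>x. (x powr (1 - s) * ((x + 1) / 2) powr s - 1 - (1 - s / 2) * (x - 1)) / (s * (s - 1)))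
     has_real_derivative
     (x powr (- s) * ((x + 1) / 2) powr (s - 1) * (x + 1 - s) / 2 - (1 - s / 2)) / (s * (s - 1))) (at x)"
proof -
  have e1: "x powr (1 - s) = x powr (- s) * x"
    using powr_add[of x "-s" 1] x by (simp add: algebra_simps)
  have e2: "((x + 1) / 2) powr s = ((x + 1) / 2) powr (s - 1) * ((x + 1) / 2)"
    using powr_add[of "(x+1)/2" "s-1" 1] x by (simp add: algebra_simps)
  have e3: "(1 - s) * x powr - s * ((x + 1) / 2) powr s * 2 +
        s * ((x + 1) / 2) powr (s - 1) * x powr (1 - s) =
        x powr - s * ((x + 1) / 2) powr (s - 1) * (x + 1 - s)"
    unfolding e1 e2 by (simp add: field_simps)
  show ?thesis
    using x s e3 by (auto intro!: derivative_eq_intros)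
qed
lemma ddpsi_alt: assumes x: "x > 0" shows "ddpsi s x = x powr (-s-1) * ((x+1)/2) powr (s-2) / 4"
proof -
  have a: "((x+1)/2) powr (s-2) = (x+1) powr (s-2) / 2 powr (s-2)"
    using x by (simp add: powr_divide)
  have b: "(2::real) powr (s-2) = 2 powr s / 4"
    by (simp add: powr_diff)
  have c: "(2::real) powr (-s) = 1 / 2 powr s"
    by (simp add: powr_minus_divide)
  show ?thesis unfolding ddpsi_def a b c by (simp add: field_simps)
qed

lemma dpsi_gen_deriv:
  assumes x: "x > 0" and s: "s \<noteq> 0" "s \<noteq> 1"
  shows "((\<lambda>x. (x powr (- s) * ((x + 1) / 2) powr (s - 1) * (x + 1 - s) / 2 - (1 - s / 2)) / (s * (s - 1)))
     has_real_derivative x powr (-s-1) * ((x+1)/2) powr (s-2) / 4) (at x)"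
proof -
  have e1: "x powr (- s) = x powr (-s-1) * x"
    using powr_add[of x "-s-1" 1] x by (simp add: algebra_simps)
  have e2: "((x + 1) / 2) powr (s - 1) = ((x + 1) / 2) powr (s - 2) * ((x + 1) / 2)"
    using powr_add[of "(x+1)/2" "s-2" 1] x by (simp add: algebra_simps)
  have ss: "s * (s - 1) \<noteq> 0" using s by simp
  have e3: "(8 * (((s - 1) * ((x + 1) / 2) powr (s - 2) * x powr - s / 2 -
           s * x powr (- s - 1) * ((x + 1) / 2) powr (s - 1)) * (x + 1 - s)) +
         8 * (x powr - s * ((x + 1) / 2) powr (s - 1))) / (4 * (s * (s - 1))) =
        x powr (- s - 1) * ((x + 1) / 2) powr (s - 2)"
    unfolding e1 e2 using ss by (simp add: field_simps)
  show ?thesis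
    using x s e3 by (auto intro!: derivative_eq_intros)
qed
lemma psi_deriv: assumes x: "x > 0" shows "(psi s has_real_derivative dpsi s x) (at x)"
proof -
  consider "s = 0" | "s = 1" | "s \<noteq> 0" "s \<noteq> 1" by blast
  then show ?thesis
  proof cases
    case 1
    have x1: "x + 1 \<noteq> 0" using x by simp
    have eq0: "(x * 2 + 2) / (2 * ((x + 1) * (x + 1))) = 1 / (x + 1)"
    proof -
      have "(x * 2 + 2) / (2 * ((x + 1) * (x + 1))) = (2 * (x + 1)) / (2 * ((x + 1) * (x + 1)))"
        by (simp add: algebra_simps)
      also have "\<dots> = 1 / (x + 1)" using x1 by (simp only: mult_divide_mult_cancel_left) simp
      finally show ?thesis .
    qed
    have f: "psi s = (\<lambda>x. x * ln (2 * x / (x + 1)) - (x - 1) / 2)"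
      using 1 by (intro ext) (simp add: psi_def)
    have "((\<lambda>x. x * ln (2 * x / (x + 1)) - (x - 1) / 2) has_real_derivative
        ln (2 * x / (x + 1)) + 1 / (x + 1) - 1 / 2) (at x)"
      using x by (auto intro!: derivative_eq_intros) (simp add: eq0)
    then show ?thesis using 1 f by (simp add: dpsi_def)
  next
    case 2
    have f: "psi s = (\<lambda>x. (x + 1) / 2 * ln ((x + 1) / (2 * x)) + (x - 1) / 2)"
      using 2 by (intro ext) (simp add: psi_def)
    have "((\<lambda>x. (x + 1) / 2 * ln ((x + 1) / (2 * x)) + (x - 1) / 2) has_real_derivative
        ln ((x + 1) / (2 * x)) / 2 + 1 / 2 - 1 / (2 * x)) (at x)"
      using x by (auto intro!: derivative_eq_intros) 
    then show ?thesis using 2 f by (simp add: dpsi_def)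
  next
    case 3
    have f: "psi s = (\<lambda>x. (x powr (1 - s) * ((x + 1) / 2) powr s - 1 - (1 - s / 2) * (x - 1)) / (s * (s - 1)))"
      using 3 by (intro ext) (simp add: psi_def)
    show ?thesis using psi_gen_deriv[OF x 3] 3 f by (simp add: dpsi_def)
  qed
qed

lemma dpsi_deriv: assumes x: "x > 0" shows "(dpsi s has_real_derivative ddpsi s x) (at x)"
proof -
  consider "s = 0" | "s = 1" | "s \<noteq> 0" "s \<noteq> 1" by blast
  then show ?thesis
  proof cases
    case 1
    have f: "dpsi s = (\<lambda>x. ln (2 * x / (x + 1)) + 1 / (x + 1) - 1 / 2)"
      using 1 by (intro ext) (simp add: dpsi_def)
    have x1: "x + 1 \<noteq> 0" using x by simp
    have eq0: "(x * 2 + 2) / (2 * x * ((x + 1) * (x + 1))) - 1 / ((x + 1) * (x + 1)) = 1 / (x * (x + 1)\<^sup>2)"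
    proof -
      define y where "y = x + 1"
      have y: "y \<noteq> 0" "x \<noteq> 0" using x by (auto simp: y_def)
      have "(x * 2 + 2) / (2 * x * ((x + 1) * (x + 1))) - 1 / ((x + 1) * (x + 1)) = (2 * y) / (2 * x * (y * y)) - 1 / (y * y)"
        by (simp add: y_def algebra_simps)
      also have "\<dots> = (y - x) / (x * y * y)" using y by (simp add: field_simps)
      also have "\<dots> = 1 / (x * (x + 1)\<^sup>2)" by (simp add: y_def power2_eq_square)
      finally show ?thesis .
    qed
    have v: "ddpsi s x = 1 / (x * (x + 1)^2)"
      using x 1 by (simp add: ddpsi_def powr_minus_divide power2_eq_square)
    have "((\<lambda>x. ln (2 * x / (x + 1)) + 1 / (x + 1) - 1 / 2) has_real_derivative
        1 / (x * (x + 1)^2)) (at x)"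
      using x by (auto intro!: derivative_eq_intros) (simp add: eq0)
    then show ?thesis using f v by simp
  next
    case 2
    have f: "dpsi s = (\<lambda>x. ln ((x + 1) / (2 * x)) / 2 + 1 / 2 - 1 / (2 * x))"
      using 2 by (intro ext) (simp add: dpsi_def)
    have eq1: "1 / (2 * (x * x)) - 1 / (2 * (x * (x + 1))) = 1 / (2 * x\<^sup>2 * (x + 1))"
    proof -
      define y where "y = x + 1"
      have y: "y \<noteq> 0" "x \<noteq> 0" using x by (auto simp: y_def)
      have "1 / (2 * (x * x)) - 1 / (2 * (x * (x + 1))) = 1 / (2 * (x * x)) - 1 / (2 * (x * y))"
        by (simp add: y_def)
      also have "\<dots> = (y - x) / (2 * x * x * y)" using y by (simp add: field_simps)
      also have "\<dots> = 1 / (2 * x\<^sup>2 * (x + 1))" by (simp add: y_def power2_eq_square)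
      finally show ?thesis .
    qed
    have v: "ddpsi s x = 1 / (2 * x^2 * (x + 1))"
      using x 2 by (simp add: ddpsi_def powr_minus_divide power2_eq_square)
    have "((\<lambda>x. ln ((x + 1) / (2 * x)) / 2 + 1 / 2 - 1 / (2 * x)) has_real_derivative
        1 / (2 * x^2 * (x + 1))) (at x)"
      using x by (auto intro!: derivative_eq_intros) (simp add: eq1)
    then show ?thesis using f v by simp
  next
    case 3
    have f: "dpsi s = (\<lambda>x. (x powr (- s) * ((x + 1) / 2) powr (s - 1) * (x + 1 - s) / 2 - (1 - s / 2)) / (s * (s - 1)))"
      using 3 by (intro ext) (simp add: dpsi_def)
    show ?thesis unfolding f ddpsi_alt[OF x] using dpsi_gen_deriv[OF x 3] .
  qed
qed
lemma vals1: "phi t 1 = 0" "dphi t 1 = 0" "psi s 1 = 0" "dpsi s 1 = 0"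
  by (auto simp: phi_def dphi_def psi_def dpsi_def field_simps)

lemma tangent_nonneg:
  fixes F F' F'' :: "real \<Rightarrow> real"
  assumes r: "0 < r" "r \<le> 1" "1 \<le> R"
    and d1: "\<And>x. x > 0 \<Longrightarrow> (F has_real_derivative F' x) (at x)"
    and d2: "\<And>x. x > 0 \<Longrightarrow> (F' has_real_derivative F'' x) (at x)"
    and c: "\<And>x. r \<le> x \<Longrightarrow> x \<le> R \<Longrightarrow> F'' x \<ge> 0"
    and z: "F 1 = 0" "F' 1 = 0"
    and x: "r \<le> x" "x \<le> R"
  shows "F x \<ge> 0"
proof -
  consider "x = 1" | "x > 1" | "x < 1" by linarith
  then show ?thesis
  proof cases
    case 1 then show ?thesis using z by simp
  next
    case 2
    obtain y where y: "1 < y" "y < x" "F x - F 1 = (x - 1) * F' y"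
      using MVT2[OF 2, of F F'] d1 by auto
    obtain w where w: "1 < w" "w < y" "F' y - F' 1 = (y - 1) * F'' w"
      using MVT2[OF y(1), of F' F''] d2 by auto
    have "F'' w \<ge> 0" using c[of w] w y x r by auto
    then have "F' y \<ge> 0" using w z y by simp
    then show ?thesis using y z 2 by simp
  next
    case 3
    obtain y where y: "x < y" "y < 1" "F 1 - F x = (1 - x) * F' y"
      using MVT2[OF 3, of F F'] d1 x r by auto
    obtain w where w: "y < w" "w < 1" "F' 1 - F' y = (1 - y) * F'' w"
      using MVT2[OF y(2), of F' F''] d2 x r y by auto
    have "F'' w \<ge> 0" using c[of w] w y x r by auto
    then have "(1 - y) * F'' w \<ge> 0" using w by simp
    then have "F' y \<le> 0" using w z y by simp
    then have "(1 - x) * F' y \<le> 0" using 3 by (simp add: mult_nonneg_nonpos)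
    then show ?thesis using y z by simp
  qed
qed

definition hh :: "real \<Rightarrow> real \<Rightarrow> real \<Rightarrow> real" where
  "hh s t x = 2 powr (- s) * (x + 1) powr (s - 2) * x powr (1 - s - t)"

lemma ddpsi_hh: "x > 0 \<Longrightarrow> ddpsi s x = hh s t x * x powr (t - 2)"
proof -
  assume x: "x > 0"
  have "x powr (1 - s - t) * x powr (t - 2) = x powr ((1 - s - t) + (t - 2))"
    by (rule powr_add[symmetric])
  also have "(1 - s - t) + (t - 2) = - s - 1" by simp
  finally have "x powr (1 - s - t) * x powr (t - 2) = x powr (- s - 1)" .
  moreover have "hh s t x * x powr (t - 2) = 2 powr (- s) * (x + 1) powr (s - 2) * (x powr (1 - s - t) * x powr (t - 2))"
    unfolding hh_def by (simp only: mult.assoc)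
  ultimately show ?thesis unfolding ddpsi_def by (simp only: mult_ac)
qed

lemma coeff_hh: assumes r: "r > 0"
  shows "1 / (4 * r powr (t + 1)) * ((r + 1) / (2 * r)) powr (s - 2) = hh s t r"
proof -
  have a: "((r + 1) / (2 * r)) powr (s - 2) = (r + 1) powr (s - 2) / (2 powr (s - 2) * r powr (s - 2))"
    using r by (simp add: powr_divide powr_mult)
  have b: "(2::real) powr (s - 2) = 2 powr s / 4" by (simp add: powr_diff)
  have c: "(2::real) powr (- s) = 1 / 2 powr s" by (simp add: powr_minus_divide)
  have d: "r powr (1 - s - t) = 1 / (r powr (t + 1) * r powr (s - 2))"
  proof -
    have "r powr (t + 1) * r powr (s - 2) * r powr (1 - s - t) = r powr ((t + 1) + (s - 2) + (1 - s - t))"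
      by (simp only: powr_add)
    also have "(t + 1) + (s - 2) + (1 - s - t) = 0" by simp
    finally have "r powr (t + 1) * r powr (s - 2) * r powr (1 - s - t) = 1" using r by simp
    then show ?thesis using r by (simp add: field_simps)
  qed
  show ?thesis unfolding hh_def a b c d by (simp add: field_simps)
qed

lemma hh_alt: assumes x: "x > 0"
  shows "hh s t x = 2 powr (- s) * (x / (x + 1)) powr (1 - s - t) * (x + 1) powr (- 1 - t)"
proof -
  have a: "(x / (x + 1)) powr (1 - s - t) = x powr (1 - s - t) / (x + 1) powr (1 - s - t)"
    using x by (simp add: powr_divide)
  have b: "(x + 1) powr (- 1 - t) / (x + 1) powr (1 - s - t) = (x + 1) powr (s - 2)"
    using x by (simp add: powr_diff[symmetric])
  have p: "(x + 1) powr (1 - s - t) > 0" using x by simp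
  show ?thesis unfolding hh_def a b[symmetric] using p by (simp add: field_simps)
qed

lemma frac_mono: assumes "0 < x" "x \<le> y" shows "(x::real) / (x + 1) \<le> y / (y + 1)"
proof -
  have a: "x / (x + 1) = 1 - 1 / (x + 1)" "y / (y + 1) = 1 - 1 / (y + 1)"
    using assms by (simp_all add: field_simps)
  have "1 / (y + 1) \<le> 1 / (x + 1)" using assms by (intro divide_left_mono) auto
  then show ?thesis unfolding a by simp
qed

lemma hh_mono_A:
  assumes "s + t \<le> 1" "t \<le> -1" "0 < x" "x \<le> y"
  shows "hh s t x \<le> hh s t y"
proof -
  have y: "y > 0" using assms by simp
  have "(x / (x + 1)) powr (1 - s - t) \<le> (y / (y + 1)) powr (1 - s - t)"
    using assms by (intro powr_mono2 frac_mono) auto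
  moreover have "(x + 1) powr (- 1 - t) \<le> (y + 1) powr (- 1 - t)"
    using assms by (intro powr_mono2) auto
  ultimately have "(x / (x + 1)) powr (1 - s - t) * (x + 1) powr (- 1 - t) \<le> (y / (y + 1)) powr (1 - s - t) * (y + 1) powr (- 1 - t)"
    by (rule mult_mono) auto
  then have "2 powr (- s) * ((x / (x + 1)) powr (1 - s - t) * (x + 1) powr (- 1 - t)) \<le> 2 powr (- s) * ((y / (y + 1)) powr (1 - s - t) * (y + 1) powr (- 1 - t))"
    by (rule mult_left_mono) simp
  then show ?thesis unfolding hh_alt[OF assms(3)] hh_alt[OF y] by (simp add: mult.assoc)
qed

lemma hh_mono_B:
  assumes "s + t \<ge> 1" "t \<ge> -1" "0 < x" "x \<le> y"
  shows "hh s t y \<le> hh s t x"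
proof -
  have y: "y > 0" using assms by simp
  have "(y / (y + 1)) powr (1 - s - t) \<le> (x / (x + 1)) powr (1 - s - t)"
    using assms by (intro powr_mono2' frac_mono) auto
  moreover have "(y + 1) powr (- 1 - t) \<le> (x + 1) powr (- 1 - t)"
    using assms by (intro powr_mono2') auto
  ultimately have "(y / (y + 1)) powr (1 - s - t) * (y + 1) powr (- 1 - t) \<le> (x / (x + 1)) powr (1 - s - t) * (x + 1) powr (- 1 - t)"
    by (rule mult_mono) auto
  then have "2 powr (- s) * ((y / (y + 1)) powr (1 - s - t) * (y + 1) powr (- 1 - t)) \<le> 2 powr (- s) * ((x / (x + 1)) powr (1 - s - t) * (x + 1) powr (- 1 - t))"
    by (rule mult_left_mono) simp
  then show ?thesis unfolding hh_alt[OF assms(3)] hh_alt[OF y] by (simp add: mult.assoc)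
qed

lemma cmp_lower:
  assumes r: "0 < r" "r \<le> 1" "1 \<le> R"
    and c: "\<And>x. r \<le> x \<Longrightarrow> x \<le> R \<Longrightarrow> c \<le> hh s t x"
    and x: "r \<le> x" "x \<le> R"
  shows "psi s x - c * phi t x \<ge> 0"
proof (rule tangent_nonneg[where F="\<lambda>x. psi s x - c * phi t x"
    and F' = "\<lambda>x. dpsi s x - c * dphi t x" and F'' = "\<lambda>x. ddpsi s x - c * x powr (t - 2)", OF r _ _ _ _ _ x])
  fix x :: real assume "x > 0"
  then show "((\<lambda>x. psi s x - c * phi t x) has_real_derivative dpsi s x - c * dphi t x) (at x)"
    by (intro DERIV_diff DERIV_cmult psi_deriv phi_deriv)
next
  fix x :: real assume "x > 0"
  then show "((\<lambda>x. dpsi s x - c * dphi t x) has_real_derivative ddpsi s x - c * x powr (t - 2)) (at x)"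
    by (intro DERIV_diff DERIV_cmult dpsi_deriv dphi_deriv)
next
  fix x assume x: "r \<le> x" "x \<le> R"
  then have "x > 0" using r by simp
  then have "ddpsi s x - c * x powr (t - 2) = (hh s t x - c) * x powr (t - 2)"
    by (simp add: ddpsi_hh[of x s t] algebra_simps)
  then show "ddpsi s x - c * x powr (t - 2) \<ge> 0" using c[OF x] by simp
qed (simp_all add: vals1)

lemma cmp_upper:
  assumes r: "0 < r" "r \<le> 1" "1 \<le> R"
    and c: "\<And>x. r \<le> x \<Longrightarrow> x \<le> R \<Longrightarrow> hh s t x \<le> c"
    and x: "r \<le> x" "x \<le> R"
  shows "c * phi t x - psi s x \<ge> 0"
proof (rule tangent_nonneg[where F="\<lambda>x. c * phi t x - psi s x"
    and F' = "\<lambda>x. c * dphi t x - dpsi s x" and F'' = "\<lambda>x. c * x powr (t - 2) - ddpsi s x", OF r _ _ _ _ _ x])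
  fix x :: real assume "x > 0"
  then show "((\<lambda>x. c * phi t x - psi s x) has_real_derivative c * dphi t x - dpsi s x) (at x)"
    by (intro DERIV_diff DERIV_cmult psi_deriv phi_deriv)
next
  fix x :: real assume "x > 0"
  then show "((\<lambda>x. c * dphi t x - dpsi s x) has_real_derivative c * x powr (t - 2) - ddpsi s x) (at x)"
    by (intro DERIV_diff DERIV_cmult dpsi_deriv dphi_deriv)
next
  fix x assume x: "r \<le> x" "x \<le> R"
  then have "x > 0" using r by simp
  then have "c * x powr (t - 2) - ddpsi s x = (c - hh s t x) * x powr (t - 2)"
    by (simp add: ddpsi_hh[of x s t] algebra_simps)
  then show "c * x powr (t - 2) - ddpsi s x \<ge> 0" using c[OF x] by simp
qed (simp_all add: vals1)
lemma Phi_term: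
  fixes a b t :: real assumes a: "a > 0" and b: "b > 0"
  shows "b * phi t (a / b) = (if t = 0 then a - b + b * ln (b / a)
      else if t = 1 then a * ln (a / b) - a + b
      else (a powr t * b powr (1 - t) - b - t * (a - b)) / (t * (t - 1)))"
proof -
  have l: "ln (a / b) = - ln (b / a)" using a b by (simp add: ln_div)
  have p: "b * (a / b) powr t = a powr t * b powr (1 - t)"
  proof -
    have "b powr (1 - t) = b / b powr t" using b by (simp add: powr_diff)
    then show ?thesis using a b by (simp add: powr_divide field_simps)
  qed
  show ?thesis using a b p unfolding phi_def by (auto simp: field_simps l)
qed

lemma Phi_eq:
  assumes p: "p \<in> Gamma n" and q: "q \<in> Gamma n"
  shows "Phi t n p q = (\<Sum>i<n. q i * phi t (p i / q i))"
proof -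
  have pp: "\<And>i. i < n \<Longrightarrow> p i > 0" and sp: "(\<Sum>i<n. p i) = 1"
    using p by (auto simp: Gamma_def)
  have qq: "\<And>i. i < n \<Longrightarrow> q i > 0" and sq: "(\<Sum>i<n. q i) = 1"
    using q by (auto simp: Gamma_def)
  have T: "(\<Sum>i<n. q i * phi t (p i / q i)) = (\<Sum>i<n. (if t = 0 then p i - q i + q i * ln (q i / p i)
      else if t = 1 then p i * ln (p i / q i) - p i + q i
      else (p i powr t * q i powr (1 - t) - q i - t * (p i - q i)) / (t * (t - 1))))"
    by (rule sum.cong) (simp_all add: Phi_term pp qq)
  consider "t = 0" | "t = 1" | "t \<noteq> 0" "t \<noteq> 1" by blast
  then show ?thesis
  proof cases
    case 1 then show ?thesis unfolding T Phi_def
      by (simp add: sum.distrib sum_subtractf sp sq)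
  next
    case 2 then show ?thesis unfolding T Phi_def
      by (simp add: sum.distrib sum_subtractf sp sq)
  next
    case 3 then show ?thesis unfolding T Phi_def
      by (simp add: sum_divide_distrib[symmetric] sum.distrib sum_subtractf sum_distrib_left[symmetric] sp sq)
  qed
qed

lemma Omega_term:
  fixes a b s :: real assumes a: "a > 0" and b: "b > 0"
  shows "b * psi s (a / b) = (if s = 0 then a * ln (2 * a / (a + b)) - (a - b) / 2
      else if s = 1 then (a + b) / 2 * ln ((a + b) / (2 * a)) + (a - b) / 2
      else (a * ((a + b) / (2 * a)) powr s - b - (1 - s / 2) * (a - b)) / (s * (s - 1)))"
proof -
  define y where "y = a / b"
  have y: "y > 0" using a b by (simp add: y_def)
  have e1: "2 * y / (y + 1) = 2 * a / (a + b)" using a b by (simp add: y_def field_simps)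
  have e2: "(y + 1) / (2 * y) = (a + b) / (2 * a)" using a b by (simp add: y_def field_simps)
  have e3: "y powr (1 - s) * ((y + 1) / 2) powr s = y * ((y + 1) / (2 * y)) powr s"
  proof -
    have "((y + 1) / (2 * y)) powr s = ((y + 1) / 2) powr s / y powr s"
      using y by (simp add: powr_divide[symmetric])
    moreover have "y powr (1 - s) = y / y powr s" using y by (simp add: powr_diff)
    ultimately show ?thesis by simp
  qed
  have by_: "b * y = a" using b by (simp add: y_def)
  show ?thesis unfolding y_def[symmetric] psi_def e1 e2 e3
    using b by (auto simp: field_simps by_ simp flip: by_)
qed
lemma Omega_eq:
  assumes p: "p \<in> Gamma n" and q: "q \<in> Gamma n"
  shows "Omega s n p q = (\<Sum>i<n. q i * psi s (p i / q i))"
proof -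
  have pp: "\<And>i. i < n \<Longrightarrow> p i > 0" and sp: "(\<Sum>i<n. p i) = 1"
    using p by (auto simp: Gamma_def)
  have qq: "\<And>i. i < n \<Longrightarrow> q i > 0" and sq: "(\<Sum>i<n. q i) = 1"
    using q by (auto simp: Gamma_def)
  have T: "(\<Sum>i<n. q i * psi s (p i / q i)) = (\<Sum>i<n. (if s = 0 then p i * ln (2 * p i / (p i + q i)) - (p i - q i) / 2
      else if s = 1 then (p i + q i) / 2 * ln ((p i + q i) / (2 * p i)) + (p i - q i) / 2
      else (p i * ((p i + q i) / (2 * p i)) powr s - q i - (1 - s / 2) * (p i - q i)) / (s * (s - 1))))"
    by (rule sum.cong) (simp_all add: Omega_term pp qq)
  consider "s = 0" | "s = 1" | "s \<noteq> 0" "s \<noteq> 1" by blast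
  then show ?thesis
  proof cases
    case 1 then show ?thesis unfolding T Omega_def
      by (simp add: sum.distrib sum_subtractf sum_divide_distrib[symmetric] sp sq)
  next
    case 2 then show ?thesis unfolding T Omega_def
      by (simp add: sum.distrib sum_subtractf sum_divide_distrib[symmetric] sp sq)
  next
    case 3 then show ?thesis unfolding T Omega_def
      by (simp add: sum_divide_distrib[symmetric] sum.distrib sum_subtractf sum_distrib_left[symmetric] sp sq)
  qed
qed

lemma key_lower:
  assumes p: "p \<in> Gamma n" and q: "q \<in> Gamma n"
    and r: "0 < r" "r \<le> 1" "1 \<le> R"
    and x: "\<And>i. i < n \<Longrightarrow> r \<le> p i / q i \<and> p i / q i \<le> R"
    and c: "\<And>x. r \<le> x \<Longrightarrow> x \<le> R \<Longrightarrow> c \<le> hh s t x"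
  shows "c * Phi t n p q \<le> Omega s n p q"
proof -
  have qq: "\<And>i. i < n \<Longrightarrow> q i > 0" using q by (auto simp: Gamma_def)
  have "Omega s n p q - c * Phi t n p q = (\<Sum>i<n. q i * (psi s (p i / q i) - c * phi t (p i / q i)))"
    unfolding Phi_eq[OF p q] Omega_eq[OF p q]
    by (simp add: sum_distrib_left sum_subtractf algebra_simps)
  also have "\<dots> \<ge> 0"
  proof (rule sum_nonneg)
    fix i assume i: "i \<in> {..<n}"
    show "q i * (psi s (p i / q i) - c * phi t (p i / q i)) \<ge> 0"
      using qq[of i] i cmp_lower[OF r c, of "p i / q i"] x[of i] by auto
  qed
  finally show ?thesis by simp
qed

lemma key_upper:
  assumes p: "p \<in> Gamma n" and q: "q \<in> Gamma n"
    and r: "0 < r" "r \<le> 1" "1 \<le> R"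
    and x: "\<And>i. i < n \<Longrightarrow> r \<le> p i / q i \<and> p i / q i \<le> R"
    and c: "\<And>x. r \<le> x \<Longrightarrow> x \<le> R \<Longrightarrow> hh s t x \<le> c"
  shows "Omega s n p q \<le> c * Phi t n p q"
proof -
  have qq: "\<And>i. i < n \<Longrightarrow> q i > 0" using q by (auto simp: Gamma_def)
  have "c * Phi t n p q - Omega s n p q = (\<Sum>i<n. q i * (c * phi t (p i / q i) - psi s (p i / q i)))"
    unfolding Phi_eq[OF p q] Omega_eq[OF p q]
    by (simp add: sum_distrib_left sum_subtractf algebra_simps)
  also have "\<dots> \<ge> 0"
  proof (rule sum_nonneg)
    fix i assume i: "i \<in> {..<n}"
    show "q i * (c * phi t (p i / q i) - psi s (p i / q i)) \<ge> 0"
      using qq[of i] i cmp_upper[OF r c, of "p i / q i"] x[of i] by auto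
  qed
  finally show ?thesis by simp
qed

lemma one_between:
  assumes "n \<ge> 2" and p: "p \<in> Gamma n" and q: "q \<in> Gamma n"
    and x: "\<And>i. i < n \<Longrightarrow> r \<le> p i / q i \<and> p i / q i \<le> R"
  shows "r \<le> 1" "1 \<le> R"
proof -
  have pp: "\<And>i. i < n \<Longrightarrow> p i > 0" and sp: "(\<Sum>i<n. p i) = 1"
    using p by (auto simp: Gamma_def)
  have qq: "\<And>i. i < n \<Longrightarrow> q i > 0" and sq: "(\<Sum>i<n. q i) = 1"
    using q by (auto simp: Gamma_def)
  have ne: "{..<n} \<noteq> {}" using assms(1) by (simp add: lessThan_empty_iff)
  show "r \<le> 1"
  proof (rule ccontr)
    assume "\<not> r \<le> 1"
    then have "\<And>i. i < n \<Longrightarrow> q i < p i"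
      using x qq by (metis less_divide_eq_1_pos not_le order_less_le_trans)
    then have "(\<Sum>i<n. q i) < (\<Sum>i<n. p i)"
      using ne by (intro sum_strict_mono) auto
    then show False using sp sq by simp
  qed
  show "1 \<le> R"
  proof (rule ccontr)
    assume "\<not> 1 \<le> R"
    then have "\<And>i. i < n \<Longrightarrow> p i < q i"
      using x qq by (metis divide_less_eq_1_pos not_le order_le_less_trans)
    then have "(\<Sum>i<n. p i) < (\<Sum>i<n. q i)"
      using ne by (intro sum_strict_mono) auto
    then show False using sp sq by simp
  qed
qed

theorem theorem4p1:
  fixes n :: nat and p q :: "nat \<Rightarrow> real" and r R s t :: real
  assumes "n \<ge> 2" and "p \<in> Gamma n" and "q \<in> Gamma n"
    and "0 < r" and "r \<le> R"
    and "\<And>i. i < n \<Longrightarrow> r \<le> p i / q i \<and> p i / q i \<le> R"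
  shows "(s + t \<le> 1 \<and> t \<le> -1 \<longrightarrow>
           1 / (4 * r powr (t + 1)) * ((r + 1) / (2 * r)) powr (s - 2) * Phi t n p q \<le> Omega s n p q \<and>
           Omega s n p q \<le> 1 / (4 * R powr (t + 1)) * ((R + 1) / (2 * R)) powr (s - 2) * Phi t n p q)
       \<and> (s + t \<ge> 1 \<and> t \<ge> -1 \<longrightarrow>
           1 / (4 * R powr (t + 1)) * ((R + 1) / (2 * R)) powr (s - 2) * Phi t n p q \<le> Omega s n p q \<and>
           Omega s n p q \<le> 1 / (4 * r powr (t + 1)) * ((r + 1) / (2 * r)) powr (s - 2) * Phi t n p q)"
proof -
  note o = one_between[OF assms(1,2,3,6)]
  have rr: "0 < r" "r \<le> 1" "1 \<le> R" using assms(4) o by auto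
  have R0: "R > 0" using assms(4,5) by simp
  note cr = coeff_hh[OF assms(4), of t s] and cR = coeff_hh[OF R0, of t s]
  show ?thesis unfolding cr cR
  proof (intro conjI impI)
    assume A: "s + t \<le> 1 \<and> t \<le> -1"
    show "hh s t r * Phi t n p q \<le> Omega s n p q"
      by (rule key_lower[OF assms(2,3) rr assms(6)]) (use A rr in \<open>auto intro: hh_mono_A\<close>)
    show "Omega s n p q \<le> hh s t R * Phi t n p q"
      by (rule key_upper[OF assms(2,3) rr assms(6)]) (use A rr in \<open>auto intro: hh_mono_A\<close>)
  next
    assume B: "1 \<le> s + t \<and> -1 \<le> t"
    show "hh s t R * Phi t n p q \<le> Omega s n p q"
      by (rule key_lower[OF assms(2,3) rr assms(6)]) (use B rr in \<open>auto intro: hh_mono_B\<close>)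
    show "Omega s n p q \<le> hh s t r * Phi t n p q"
      by (rule key_upper[OF assms(2,3) rr assms(6)]) (use B rr in \<open>auto intro: hh_mono_B\<close>)
  qed
qed
end
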